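(* For every quadrilateral $Q$ in $K^2$, the symmetric bilinear form $\langle -,-\rangle_Q$ on $K^2$ is nondegenerate.
   Context: $K$ is a field of characteristic $\neq 2$. Every line $L$ in $K^2$ has an equation $tX-uY+v=0$ normalized so that $t=1$ if $u=0$ and $u=1$ if $u\neq 0$; coefficients denoted $t_L,u_L,v_L$. A quadrilateral $Q=ABA'B'$ consists of four distinct lines $A,B,A',B'$ (sides), not all through one point, with adjacent sides ($A,B$; $B,A'$; $A',B'$; $B',A$) not parallel; opposite sides may be parallel (three sides may be concurrent). Let $\alpha=t_Au_Bu_{A'}u_{B'}-u_At_Bu_{A'}u_{B'}+u_Au_Bt_{A'}u_{B'}-u_Au_Bu_{A'}t_{B'}$, $\beta=t_Au_Bt_{A'}u_{B'}-u_At_Bu_{A'}t_{B'}$, $\gamma=t_At_Bt_{A'}u_{B'}-t_At_Bu_{A'}t_{B'}+t_Au_Bt_{A'}t_{B'}-u_At_Bt_{A'}t_{B'}$, and $\langle \mathbf v,\mathbf w\rangle_Q=\mathbf v^T\begin{pmatrix}\gamma&-\beta\\-\beta&\alpha\end{pmatrix}\mathbf w$ for $\mathbf v,\mathbf w\in K^2$. *)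

theory Defs
  imports Main
begin

text \<open>A line in K^2 is represented by its normalized coefficient triple (t, u, v) of the
equation t X - u Y + v = 0, normalized so that t = 1 if u = 0 and u = 1 if u is nonzero.\<close>

type_synonym 'a line = "'a \<times> 'a \<times> 'a"

definition t_L :: "'a line \<Rightarrow> 'a" where "t_L L = fst L"
definition u_L :: "'a line \<Rightarrow> 'a" where "u_L L = fst (snd L)"
definition v_L :: "'a line \<Rightarrow> 'a" where "v_L L = snd (snd L)"

definition is_line :: "'a::field line \<Rightarrow> bool" where
  "is_line L \<longleftrightarrow> (u_L L = 0 \<and> t_L L = 1) \<or> u_L L = 1"

definition on_line :: "'a::field \<times> 'a \<Rightarrow> 'a line \<Rightarrow> bool" where
  "on_line p L \<longleftrightarrow> t_L L * fst p - u_L L * snd p + v_L L = 0"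

definition parallel :: "'a::field line \<Rightarrow> 'a line \<Rightarrow> bool" where
  "parallel L M \<longleftrightarrow> t_L L * u_L M - u_L L * t_L M = 0"

definition quadrilateral :: "'a::field line \<Rightarrow> 'a line \<Rightarrow> 'a line \<Rightarrow> 'a line \<Rightarrow> bool" where
  "quadrilateral A B A' B' \<longleftrightarrow>
     is_line A \<and> is_line B \<and> is_line A' \<and> is_line B' \<and>
     distinct [A, B, A', B'] \<and>
     \<not> (\<exists>p. on_line p A \<and> on_line p B \<and> on_line p A' \<and> on_line p B') \<and>
     \<not> parallel A B \<and> \<not> parallel B A' \<and> \<not> parallel A' B' \<and> \<not> parallel B' A"

definition q_alpha :: "'a::field line \<Rightarrow> 'a line \<Rightarrow> 'a line \<Rightarrow> 'a line \<Rightarrow> 'a" where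
  "q_alpha A B A' B' =
     t_L A * u_L B * u_L A' * u_L B' - u_L A * t_L B * u_L A' * u_L B'
   + u_L A * u_L B * t_L A' * u_L B' - u_L A * u_L B * u_L A' * t_L B'"

definition q_beta :: "'a::field line \<Rightarrow> 'a line \<Rightarrow> 'a line \<Rightarrow> 'a line \<Rightarrow> 'a" where
  "q_beta A B A' B' =
     t_L A * u_L B * t_L A' * u_L B' - u_L A * t_L B * u_L A' * t_L B'"

definition q_gamma :: "'a::field line \<Rightarrow> 'a line \<Rightarrow> 'a line \<Rightarrow> 'a line \<Rightarrow> 'a" where
  "q_gamma A B A' B' =
     t_L A * t_L B * t_L A' * u_L B' - t_L A * t_L B * u_L A' * t_L B'
   + t_L A * u_L B * t_L A' * t_L B' - u_L A * t_L B * t_L A' * t_L B'"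

definition qform :: "'a::field line \<Rightarrow> 'a line \<Rightarrow> 'a line \<Rightarrow> 'a line \<Rightarrow> 'a \<times> 'a \<Rightarrow> 'a \<times> 'a \<Rightarrow> 'a" where
  "qform A B A' B' v w =
     (let \<alpha> = q_alpha A B A' B'; \<beta> = q_beta A B A' B'; \<gamma> = q_gamma A B A' B' in
      fst v * (\<gamma> * fst w - \<beta> * snd w) + snd v * (- \<beta> * fst w + \<alpha> * snd w))"

definition nondegenerate :: "('a::field \<times> 'a \<Rightarrow> 'a \<times> 'a \<Rightarrow> 'a) \<Rightarrow> bool" where
  "nondegenerate f \<longleftrightarrow> (\<forall>v. (\<forall>w. f v w = 0) \<longrightarrow> v = (0, 0))"

end

theory Submission
  imports Defs
begin

theorem lemma2p2:
  fixes A B A' B' :: "'a::field line"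
  assumes char: "(2::'a) \<noteq> 0"
    and Q: "quadrilateral A B A' B'"
  shows "nondegenerate (qform A B A' B')"
proof -
  define a where "a = q_alpha A B A' B'"
  define b where "b = q_beta A B A' B'"
  define g where "g = q_gamma A B A' B'"
  have det: "a * g - b * b = - ((t_L A * u_L B - u_L A * t_L B) * (t_L B * u_L A' - u_L B * t_L A')
      * (t_L A' * u_L B' - u_L A' * t_L B') * (t_L B' * u_L A - u_L B' * t_L A))"
    unfolding a_def b_def g_def q_alpha_def q_beta_def q_gamma_def by algebra
  have nz: "a * g - b * b \<noteq> 0"
    using Q unfolding det quadrilateral_def parallel_def by simp
  show ?thesis unfolding nondegenerate_def
  proof (intro allI impI)
    fix v :: "'a \<times> 'a"
    assume h: "\<forall>w. qform A B A' B' v w = 0"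
    have e1: "fst v * g - snd v * b = 0"
      using h[rule_format, of "(1,0)"] unfolding qform_def a_def b_def g_def Let_def by simp
    have e2: "- fst v * b + snd v * a = 0"
      using h[rule_format, of "(0,1)"] unfolding qform_def a_def b_def g_def Let_def by simp
    have "(a * g - b * b) * fst v = a * (fst v * g - snd v * b) + b * (- fst v * b + snd v * a)"
      by algebra
    hence "fst v = 0" using e1 e2 nz by simp
    have "(a * g - b * b) * snd v = g * (- fst v * b + snd v * a) + b * (fst v * g - snd v * b)"
      by algebra
    hence "snd v = 0" using e1 e2 nz by simp
    show "v = (0, 0)" using \<open>fst v = 0\<close> \<open>snd v = 0\<close> by (simp add: prod_eq_iff)
  qed
qed

end
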